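(* Let $\alpha\ge1$. Let $c$ and $h$ be two decision trees on $n$ propositional variables with at most $m$ nodes in total for both trees, let $D$ be an $\alpha$-log-Lipschitz distribution on $\{0,1\}^n$, and let $\rho=\log n$. There is a fixed polynomial $\mathrm{poly}(\cdot,\cdot,\cdot)$ (depending only on $\alpha$) such that for all $0<\varepsilon<\frac12$, if $\Pr_{x\sim D}[h(x)\ne c(x)]<\mathrm{poly}(\frac1m,\frac1n,\varepsilon)$, then $\mathsf{R}_\rho(c,h)<\varepsilon$.
   Context: A decision tree over $n$ propositional variables is a finite binary tree whose internal nodes are labelled by elements of $\{1,\dots,n\}$ and whose leaves are labelled $0$ or $1$; an input $x\in\{0,1\}^n$ determines a root-to-leaf path by descending to the left child at a node labelled $i$ if $x_i=0$ and to the right child if $x_i=1$, and the tree's output is the label of the reached leaf. A distribution $D$ on $\{0,1\}^n$ is $\alpha$-log-Lipschitz if $|\log D(x)-\log D(x')|\le\log\alpha$ whenever $x,x'$ differ in exactly one bit. Robust risk: $\mathsf{R}_\rho(c,h)=\Pr_{x\sim D}[\exists z\in B_\rho(x):c(z)\ne h(z)]$, where $B_\rho(x)$ is the Hamming ball of radius $\rho$ around $x$. *)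

theory Defs
  imports Complex_Main
begin

text \<open>Decision trees: internal nodes labelled by a variable index (1..n),
  leaves labelled by a bit (False = 0, True = 1).\<close>
datatype dtree = Leaf bool | Node nat dtree dtree

fun nodes :: "dtree \<Rightarrow> nat" where
  "nodes (Leaf b) = 1"
| "nodes (Node i l r) = 1 + nodes l + nodes r"

fun labels :: "dtree \<Rightarrow> nat set" where
  "labels (Leaf b) = {}"
| "labels (Node i l r) = {i} \<union> labels l \<union> labels r"

text \<open>Points of {0,1}^n are bool lists of length n; variable i (1 \<le> i \<le> n)
  is the list entry x ! (i - 1).  Go left on 0 (False), right on 1 (True).\<close>
fun eval_tree :: "dtree \<Rightarrow> bool list \<Rightarrow> bool" where
  "eval_tree (Leaf b) x = b"
| "eval_tree (Node i l r) x = (if x ! (i - 1) then eval_tree r x else eval_tree l x)"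

definition is_dtree :: "nat \<Rightarrow> dtree \<Rightarrow> bool" where
  "is_dtree n t \<longleftrightarrow> labels t \<subseteq> {1..n}"

definition cube :: "nat \<Rightarrow> bool list set" where
  "cube n = {x. length x = n}"

definition hamming :: "bool list \<Rightarrow> bool list \<Rightarrow> nat" where
  "hamming x z = card {i. i < length x \<and> x ! i \<noteq> z ! i}"

definition is_distribution :: "nat \<Rightarrow> (bool list \<Rightarrow> real) \<Rightarrow> bool" where
  "is_distribution n D \<longleftrightarrow> (\<forall>x\<in>cube n. D x \<ge> 0) \<and> (\<Sum>x\<in>cube n. D x) = 1"

text \<open>alpha-log-Lipschitz: log D is defined everywhere (D positive) and
  |log D(x) - log D(x')| \<le> log alpha for x, x' differing in exactly one bit.\<close>
definition log_lipschitz :: "real \<Rightarrow> nat \<Rightarrow> (bool list \<Rightarrow> real) \<Rightarrow> bool" where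
  "log_lipschitz \<alpha> n D \<longleftrightarrow> (\<forall>x\<in>cube n. D x > 0) \<and>
     (\<forall>x\<in>cube n. \<forall>x'\<in>cube n. hamming x x' = 1 \<longrightarrow> \<bar>ln (D x) - ln (D x')\<bar> \<le> ln \<alpha>)"

definition prob :: "nat \<Rightarrow> (bool list \<Rightarrow> real) \<Rightarrow> (bool list \<Rightarrow> bool) \<Rightarrow> real" where
  "prob n D P = (\<Sum>x\<in>{x\<in>cube n. P x}. D x)"

definition hball :: "nat \<Rightarrow> real \<Rightarrow> bool list \<Rightarrow> bool list set" where
  "hball n \<rho> x = {z\<in>cube n. real (hamming x z) \<le> \<rho>}"

definition robust_risk :: "nat \<Rightarrow> (bool list \<Rightarrow> real) \<Rightarrow> real \<Rightarrow> dtree \<Rightarrow> dtree \<Rightarrow> real" where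
  "robust_risk n D \<rho> c h = prob n D (\<lambda>x. \<exists>z\<in>hball n \<rho> x. eval_tree c z \<noteq> eval_tree h z)"

end

theory Submission
  imports Defs
begin

definition fl :: "nat set \<Rightarrow> bool list \<Rightarrow> bool list" where
  "fl T z = map (\<lambda>j. if j \<in> T then \<not> z!j else z!j) [0..<length z]"

lemma fl_length[simp]: "length (fl T z) = length z" by (simp add: fl_def)
lemma fl_nth[simp]: "j < length z \<Longrightarrow> fl T z ! j = (if j \<in> T then \<not> z!j else z!j)"
  by (simp add: fl_def)

lemma cube_finite: "finite (cube n)"
proof -
  have "cube n = {xs. set xs \<subseteq> (UNIV::bool set) \<and> length xs = n}" by (auto simp: cube_def)
  then show ?thesis using finite_lists_length_eq[of "UNIV::bool set" n] by simp
qed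

lemma fl_insert: "i \<notin> T \<Longrightarrow> fl (insert i T) z = fl {i} (fl T z)"
  by (rule nth_equalityI) auto

lemma fl_fl: "fl {i} (fl {i} z) = z"
  by (rule nth_equalityI) auto

lemma fl_cube: "z \<in> cube n \<Longrightarrow> fl T z \<in> cube n" by (simp add: cube_def)

lemma hamming_fl1: "i < length z \<Longrightarrow> hamming (fl {i} z) z = 1"
proof -
  assume i: "i < length z"
  have "{j. j < length (fl {i} z) \<and> fl {i} z ! j \<noteq> z ! j} = {i}" using i by (auto split: if_splits)
  then show ?thesis by (simp add: hamming_def)
qed

lemma lip_step:
  assumes L: "log_lipschitz \<alpha> n D" and a: "\<alpha> \<ge> 1" and z: "z \<in> cube n" and i: "i < n"
  shows "D (fl {i} z) \<le> \<alpha> * D z"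
proof -
  have zl: "length z = n" using z by (simp add: cube_def)
  have c: "fl {i} z \<in> cube n" using fl_cube[OF z] .
  have pos: "\<forall>x\<in>cube n. D x > 0" and
    lip: "\<forall>x\<in>cube n. \<forall>x'\<in>cube n. hamming x x' = 1 \<longrightarrow> \<bar>ln (D x) - ln (D x')\<bar> \<le> ln \<alpha>"
    using L unfolding log_lipschitz_def by blast+
  have p1: "D (fl {i} z) > 0" "D z > 0" using pos c z by blast+
  have h1: "hamming (fl {i} z) z = 1" using hamming_fl1[of i z] i zl by simp
  have "\<bar>ln (D (fl {i} z)) - ln (D z)\<bar> \<le> ln \<alpha>"
    using lip c z h1 by blast
  moreover have "ln (\<alpha> * D z) = ln \<alpha> + ln (D z)" using a p1 by (intro ln_mult_pos) auto
  ultimately have "ln (D (fl {i} z)) \<le> ln (\<alpha> * D z)" by linarith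
  moreover have "\<alpha> * D z > 0" using a p1 by simp
  ultimately show ?thesis using p1 ln_le_cancel_iff by blast
qed

lemma lip_chain:
  assumes L: "log_lipschitz \<alpha> n D" and a: "\<alpha> \<ge> 1"
  shows "finite T \<Longrightarrow> T \<subseteq> {..<n} \<Longrightarrow> z \<in> cube n \<Longrightarrow> D (fl T z) \<le> \<alpha> ^ card T * D z"
proof (induction T rule: finite_induct)
  case empty
  have "fl {} z = z" by (rule nth_equalityI) auto
  then show ?case by simp
next
  case (insert i T)
  have iT: "i < n" "T \<subseteq> {..<n}" using insert(4) by auto
  have "D (fl (insert i T) z) = D (fl {i} (fl T z))" using insert(2) fl_insert by metis
  also have "\<dots> \<le> \<alpha> * D (fl T z)" using lip_step[OF L a fl_cube[OF insert(5)] iT(1)] .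
  also have "\<dots> \<le> \<alpha> * (\<alpha> ^ card T * D z)"
    using insert.IH[OF iT(2) insert(5)] a by (intro mult_left_mono) auto
  finally show ?case using insert(1,2) by simp
qed

fun pv :: "dtree \<Rightarrow> bool list \<Rightarrow> nat set" where
  "pv (Leaf b) x = {}"
| "pv (Node i l r) x = insert (i - 1) (if x ! (i - 1) then pv r x else pv l x)"

lemma pv_finite[simp]: "finite (pv t x)" by (induction t) auto

lemma pv_sub: "labels t \<subseteq> {1..n} \<Longrightarrow> pv t x \<subseteq> {..<n}"
  by (induction t) auto

lemma pv_agree: "(\<forall>j\<in>pv t z. y!j = z!j) \<Longrightarrow> eval_tree t y = eval_tree t z \<and> pv t y = pv t z"
  by (induction t) auto

lemma pow_sum: "finite K \<Longrightarrow> (\<Sum>T\<in>Pow K. (x::real) ^ card T) = (1 + x) ^ card K"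
proof (induction K rule: finite_induct)
  case empty
  then show ?case by simp
next
  case (insert a K)
  have d: "Pow K \<inter> insert a ` Pow K = {}" using insert by auto
  have inj: "inj_on (insert a) (Pow K)" unfolding inj_on_def by (metis PowD insert_ident subsetD insert.hyps(2))
  have "(\<Sum>T\<in>Pow (insert a K). x ^ card T) = (\<Sum>T\<in>Pow K. x ^ card T) + (\<Sum>T\<in>insert a ` Pow K. x ^ card T)"
    unfolding Pow_insert using d insert by (simp add: sum.union_disjoint)
  also have "(\<Sum>T\<in>insert a ` Pow K. x ^ card T) = (\<Sum>T\<in>Pow K. x ^ card (insert a T))"
    using sum.reindex[OF inj] by simp
  also have "\<dots> = (\<Sum>T\<in>Pow K. x * x ^ card T)"
    using insert by (intro sum.cong) (auto simp: card_insert_if finite_subset)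
  also have "\<dots> = x * (1 + x) ^ card K" using insert by (simp add: sum_distrib_left[symmetric])
  finally have eq: "(\<Sum>T\<in>Pow (insert a K). x ^ card T) = (1 + x) ^ card K + x * (1 + x) ^ card K"
    by (simp only: insert.IH)
  have cc: "card (insert a K) = Suc (card K)" using insert by simp
  show ?case by (simp only: eq cc power_Suc distrib_right mult_1)
qed

definition sub :: "nat \<Rightarrow> nat set \<Rightarrow> (nat \<Rightarrow> bool) \<Rightarrow> bool list set" where
  "sub n V a = {z\<in>cube n. \<forall>j\<in>V. z!j = a j}"

lemma sub_finite[simp]: "finite (sub n V a)"
  using cube_finite by (simp add: sub_def)

lemma sub_split: "sub n (insert p V) (a(p:=b)) = {z\<in>sub n V a. z!p = b}" if "p \<notin> V"
  using that by (auto simp: sub_def)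

lemma pairing:
  assumes L: "log_lipschitz \<alpha> n D" and a: "\<alpha> \<ge> 1" and p: "p < n" "p \<notin> V" and V: "V \<subseteq> {..<n}"
  shows "(1 + 1/\<alpha>) * (\<Sum>z\<in>{z\<in>sub n V a. z!p = b}. D z) \<le> (\<Sum>z\<in>sub n V a. D z)"
proof -
  let ?A = "sub n V a"
  let ?B = "{z\<in>?A. z!p = b}" and ?N = "{z\<in>?A. z!p \<noteq> b}"
  have mem: "fl {p} z \<in> ?A" if "z \<in> ?A" for z
  proof -
    have zl: "length z = n" using that by (simp add: sub_def cube_def)
    have "\<forall>j\<in>V. fl {p} z ! j = a j"
    proof
      fix j assume j: "j \<in> V"
      then have "j \<noteq> p" using p(2) by blast
      moreover have "z ! j = a j" using that j by (simp add: sub_def)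
      moreover have "j < n" using j V by blast
      ultimately show "fl {p} z ! j = a j" using zl by simp
    qed
    then show ?thesis using zl by (simp add: sub_def cube_def)
  qed
  have flp: "(fl {p} z) ! p = (\<not> z ! p)" if "z \<in> ?A" for z
    using that p(1) by (simp add: sub_def cube_def)
  have img: "fl {p} ` ?N = ?B"
  proof
    show "fl {p} ` ?N \<subseteq> ?B" using mem flp by auto
  next
    show "?B \<subseteq> fl {p} ` ?N"
    proof
      fix z assume z: "z \<in> ?B"
      then have "fl {p} z \<in> ?N" using mem flp by auto
      moreover have "z = fl {p} (fl {p} z)" by (simp add: fl_fl)
      ultimately show "z \<in> fl {p} ` ?N" by blast
    qed
  qed
  have inj: "inj_on (fl {p}) ?N" by (rule inj_onI) (metis fl_fl)
  have "(\<Sum>z\<in>?B. D z) = (\<Sum>z\<in>?N. D (fl {p} z))"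
    using sum.reindex[OF inj, of D] img by simp
  also have "\<dots> \<le> (\<Sum>z\<in>?N. \<alpha> * D z)"
  proof (rule sum_mono)
    fix z assume "z \<in> ?N"
    then have "z \<in> cube n" by (simp add: sub_def)
    then show "D (fl {p} z) \<le> \<alpha> * D z" using lip_step[OF L a _ p(1)] by blast
  qed
  finally have 1: "(\<Sum>z\<in>?B. D z) \<le> \<alpha> * (\<Sum>z\<in>?N. D z)" by (simp add: sum_distrib_left)
  have 2: "(\<Sum>z\<in>?A. D z) = (\<Sum>z\<in>?B. D z) + (\<Sum>z\<in>?N. D z)"
  proof -
    have "sum D ?A = sum D (?B \<union> ?N)" by (rule arg_cong[where f="sum D"]) blast
    also have "\<dots> = sum D ?B + sum D ?N" by (rule sum.union_disjoint) auto
    finally show ?thesis .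
  qed
  have 3: "(\<Sum>z\<in>?B. D z) / \<alpha> \<le> (\<Sum>z\<in>?N. D z)"
    using 1 a by (simp add: divide_le_eq mult.commute)
  have "(1 + 1/\<alpha>) * (\<Sum>z\<in>?B. D z) = (\<Sum>z\<in>?B. D z) + (\<Sum>z\<in>?B. D z) / \<alpha>"
    by (simp add: algebra_simps)
  then show ?thesis using 2 3 by linarith
qed

lemma D_pos: "log_lipschitz \<alpha> n D \<Longrightarrow> z \<in> cube n \<Longrightarrow> D z > 0"
  unfolding log_lipschitz_def by blast

lemma child_step:
  assumes L: "log_lipschitz \<alpha> n D" and a: "\<alpha> \<ge> 1" and G: "\<Gamma> = 1 + 1/\<alpha>"
    and p: "p < n" "p \<notin> V" and V: "V \<subseteq> {..<n}"
    and IH: "(\<Sum>z\<in>sub n (insert p V) (a(p:=b)). D z * \<Gamma> ^ card (pv u z - insert p V))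
             \<le> real (nodes u) * (\<Sum>z\<in>sub n (insert p V) (a(p:=b)). D z)"
    and hpv: "\<forall>z\<in>{z\<in>sub n V a. z!p = b}. pv t z = insert p (pv u z)"
  shows "(\<Sum>z\<in>{z\<in>sub n V a. z!p = b}. D z * \<Gamma> ^ card (pv t z - V))
         \<le> real (nodes u) * (\<Sum>z\<in>sub n V a. D z)"
proof -
  let ?B = "{z\<in>sub n V a. z!p = b}"
  have G1: "\<Gamma> \<ge> 1" using G a by simp
  have eqB: "sub n (insert p V) (a(p:=b)) = ?B" using sub_split[OF p(2)] .
  have "(\<Sum>z\<in>?B. D z * \<Gamma> ^ card (pv t z - V)) \<le> (\<Sum>z\<in>?B. \<Gamma> * (D z * \<Gamma> ^ card (pv u z - insert p V)))"
  proof (rule sum_mono)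
    fix z assume z: "z \<in> ?B"
    have Dz: "D z \<ge> 0" using D_pos[OF L] z by (fastforce simp: sub_def)
    have "pv t z - V \<subseteq> insert p (pv u z - insert p V)" using hpv z by blast
    then have "card (pv t z - V) \<le> card (insert p (pv u z - insert p V))"
      by (intro card_mono) auto
    also have "\<dots> \<le> Suc (card (pv u z - insert p V))" by (simp add: card_insert_if)
    finally have "\<Gamma> ^ card (pv t z - V) \<le> \<Gamma> ^ Suc (card (pv u z - insert p V))"
      using G1 by (intro power_increasing) auto
    then have pw: "\<Gamma> ^ card (pv t z - V) \<le> \<Gamma> * \<Gamma> ^ card (pv u z - insert p V)" by simp
    show "D z * \<Gamma> ^ card (pv t z - V) \<le> \<Gamma> * (D z * \<Gamma> ^ card (pv u z - insert p V))"
    proof -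
      have "D z * \<Gamma> ^ card (pv t z - V) \<le> D z * (\<Gamma> * \<Gamma> ^ card (pv u z - insert p V))"
        using Dz pw by (intro mult_left_mono) auto
      then show ?thesis by (simp add: mult.left_commute)
    qed
  qed
  also have "\<dots> = \<Gamma> * (\<Sum>z\<in>?B. D z * \<Gamma> ^ card (pv u z - insert p V))"
    by (simp add: sum_distrib_left)
  also have "\<dots> \<le> \<Gamma> * (real (nodes u) * (\<Sum>z\<in>?B. D z))"
    using IH G1 unfolding eqB by (intro mult_left_mono) auto
  also have "\<dots> = real (nodes u) * (\<Gamma> * (\<Sum>z\<in>?B. D z))" by simp
  also have "\<dots> \<le> real (nodes u) * (\<Sum>z\<in>sub n V a. D z)"
    using pairing[OF L a p V, of a b] G by (intro mult_left_mono) auto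
  finally show ?thesis .
qed

lemma tree_bound:
  assumes L: "log_lipschitz \<alpha> n D" and a: "\<alpha> \<ge> 1" and G: "\<Gamma> = 1 + 1/\<alpha>"
  shows "labels t \<subseteq> {1..n} \<Longrightarrow> V \<subseteq> {..<n} \<Longrightarrow>
    (\<Sum>z\<in>sub n V a. D z * \<Gamma> ^ card (pv t z - V)) \<le> real (nodes t) * (\<Sum>z\<in>sub n V a. D z)"
proof (induction t arbitrary: V a)
  case (Leaf b)
  then show ?case by simp
next
  case (Node i l r)
  let ?p = "i - 1"
  let ?A = "sub n V a"
  have p: "?p < n" using Node.prems(1) by auto
  have ll: "labels l \<subseteq> {1..n}" and lr: "labels r \<subseteq> {1..n}" using Node.prems(1) by auto
  have SA: "(\<Sum>z\<in>?A. D z) \<ge> 0" using D_pos[OF L] by (intro sum_nonneg) (fastforce simp: sub_def)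
  show ?case
  proof (cases "?p \<in> V")
    case True
    have eqp: "z ! ?p = a ?p" if "z \<in> ?A" for z using that True by (simp add: sub_def)
    let ?u = "if a ?p then r else l"
    have "(\<Sum>z\<in>?A. D z * \<Gamma> ^ card (pv (Node i l r) z - V)) = (\<Sum>z\<in>?A. D z * \<Gamma> ^ card (pv ?u z - V))"
    proof (rule sum.cong)
      fix z assume z: "z \<in> ?A"
      have "pv (Node i l r) z = insert ?p (pv ?u z)" using eqp[OF z] by simp
      then have "pv (Node i l r) z - V = pv ?u z - V" using True by auto
      then show "D z * \<Gamma> ^ card (pv (Node i l r) z - V) = D z * \<Gamma> ^ card (pv ?u z - V)" by simp
    qed simp
    also have "\<dots> \<le> real (nodes ?u) * (\<Sum>z\<in>?A. D z)"
      using Node.IH(1)[OF ll Node.prems(2)] Node.IH(2)[OF lr Node.prems(2)] by (cases "a ?p") auto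
    also have "\<dots> \<le> real (nodes (Node i l r)) * (\<Sum>z\<in>?A. D z)"
      using SA by (intro mult_right_mono) auto
    finally show ?thesis .
  next
    case False
    have V': "insert ?p V \<subseteq> {..<n}" using p Node.prems(2) by auto
    have c1: "(\<Sum>z\<in>{z\<in>?A. z!?p = True}. D z * \<Gamma> ^ card (pv (Node i l r) z - V)) \<le> real (nodes r) * (\<Sum>z\<in>?A. D z)"
      by (rule child_step[OF L a G p False Node.prems(2) Node.IH(2)[OF lr V']]) simp
    have c0: "(\<Sum>z\<in>{z\<in>?A. z!?p = False}. D z * \<Gamma> ^ card (pv (Node i l r) z - V)) \<le> real (nodes l) * (\<Sum>z\<in>?A. D z)"
      by (rule child_step[OF L a G p False Node.prems(2) Node.IH(1)[OF ll V']]) simp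
    have "(\<Sum>z\<in>?A. D z * \<Gamma> ^ card (pv (Node i l r) z - V)) = 
      (\<Sum>z\<in>{z\<in>?A. z!?p = True}. D z * \<Gamma> ^ card (pv (Node i l r) z - V)) +
      (\<Sum>z\<in>{z\<in>?A. z!?p = False}. D z * \<Gamma> ^ card (pv (Node i l r) z - V))"
    proof -
      let ?f = "\<lambda>z. D z * \<Gamma> ^ card (pv (Node i l r) z - V)"
      have "sum ?f ?A = sum ?f ({z\<in>?A. z!?p = True} \<union> {z\<in>?A. z!?p = False})"
        by (rule arg_cong[where f="sum ?f"]) blast
      also have "\<dots> = sum ?f {z\<in>?A. z!?p = True} + sum ?f {z\<in>?A. z!?p = False}"
        by (rule sum.union_disjoint) auto
      finally show ?thesis .
    qed
    also have "\<dots> \<le> (real (nodes r) + real (nodes l)) * (\<Sum>z\<in>?A. D z)"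
      using c0 c1 by (simp add: distrib_right)
    also have "\<dots> \<le> real (nodes (Node i l r)) * (\<Sum>z\<in>?A. D z)"
      using SA by (intro mult_right_mono) auto
    finally show ?thesis .
  qed
qed

lemma sub_empty: "sub n {} a = cube n" by (simp add: sub_def)

lemma pow4_bound:
  fixes x :: real assumes "0 \<le> x" "x \<le> 1" shows "(1 + x) ^ 4 \<le> 1 + 15 * x"
proof -
  have e: "(1 + x) ^ 4 = 1 + 4*x + 6*x^2 + 4*x^3 + x^4" by algebra
  have "x^2 \<le> x" "x^3 \<le> x" "x^4 \<le> x"
    using power_decreasing[of 1 2 x] power_decreasing[of 1 3 x] power_decreasing[of 1 4 x] assms by auto
  then show ?thesis unfolding e by linarith
qed

lemma tree_cube:
  assumes L: "log_lipschitz \<alpha> n D" and a: "\<alpha> \<ge> 1" and dist: "is_distribution n D"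
    and t: "is_dtree n t"
  shows "(\<Sum>z\<in>cube n. D z * (1 + 1/\<alpha>) ^ card (pv t z)) \<le> real (nodes t)"
proof -
  have "(\<Sum>z\<in>sub n {} (\<lambda>_. False). D z * (1 + 1/\<alpha>) ^ card (pv t z - {}))
     \<le> real (nodes t) * (\<Sum>z\<in>sub n {} (\<lambda>_. False). D z)"
    by (rule tree_bound[OF L a refl]) (use t in \<open>auto simp: is_dtree_def\<close>)
  then show ?thesis using dist by (simp add: sub_empty is_distribution_def)
qed

lemma main_bound:
  assumes a: "\<alpha> \<ge> 1" and s: "15 * \<alpha> < 2 ^ s"
    and c: "is_dtree n c" and h: "is_dtree n h" and m: "nodes c + nodes h \<le> m"
    and dist: "is_distribution n D" and L: "log_lipschitz \<alpha> n D"
    and eps: "0 < \<epsilon>" "\<epsilon> < 1/2"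
    and hyp: "prob n D (\<lambda>x. eval_tree h x \<noteq> eval_tree c x)
               < 1/16 * (1 / real m) ^ 1 * (1 / real n) ^ (4 * s) * \<epsilon> ^ 2"
  shows "robust_risk n D (log 2 (real n)) c h < \<epsilon>"
proof -
  define E where "E = {z\<in>cube n. eval_tree h z \<noteq> eval_tree c z}"
  define \<delta> where "\<delta> = (\<Sum>z\<in>E. D z)"
  have \<delta>: "\<delta> = prob n D (\<lambda>x. eval_tree h x \<noteq> eval_tree c x)"
    by (simp add: \<delta>_def E_def prob_def)
  have Dpos: "\<And>z. z \<in> cube n \<Longrightarrow> D z > 0" using D_pos[OF L] by blast
  have fE: "finite E" using cube_finite by (simp add: E_def)
  have \<delta>0: "\<delta> \<ge> 0" unfolding \<delta>_def using Dpos by (intro sum_nonneg) (auto simp: E_def less_imp_le)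
  have s1: "s \<ge> 1"
  proof (rule ccontr)
    assume "\<not> s \<ge> 1" then have "s = 0" by simp
    then show False using s a by simp
  qed
  have n1: "n \<ge> 1"
  proof (rule ccontr)
    assume "\<not> n \<ge> 1" then have "n = 0" by simp
    then have "(1 / real n) ^ (4 * s) = 0" using s1 by simp
    then have "1/16 * (1 / real m) ^ 1 * (1 / real n) ^ (4 * s) * \<epsilon> ^ 2 = 0" by simp
    then show False using hyp \<delta> \<delta>0 by linarith
  qed
  have m1: "m \<ge> 1" using m by (cases c) auto
  define x :: real where "x = 1 / 2 ^ s"
  define \<Gamma> where "\<Gamma> = 1 + 1 / \<alpha>"
  have x0: "0 < x" "x \<le> 1" using s1 by (auto simp: x_def)
  have x4: "(1 + x) ^ 4 \<le> \<Gamma>"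
  proof -
    have "15 * x \<le> 1 / \<alpha>"
      using s a unfolding x_def by (simp add: field_simps)
    then show ?thesis using pow4_bound[OF less_imp_le[OF x0(1)] x0(2)] unfolding \<Gamma>_def by linarith
  qed
  define K where "K z = pv c z \<union> pv h z" for z
  have Ksub: "K z \<subseteq> {..<n}" for z
    using pv_sub c h by (auto simp: K_def is_dtree_def)
  have fK: "finite (K z)" for z by (simp add: K_def)
  define Q where "Q z = {T. T \<subseteq> K z \<and> (2::real) ^ card T \<le> real n}" for z
  define S where "S = Sigma E Q"
  define R where "R = {x\<in>cube n. \<exists>z\<in>hball n (log 2 (real n)) x. eval_tree c z \<noteq> eval_tree h z}"
  have rr: "robust_risk n D (log 2 (real n)) c h = (\<Sum>y\<in>R. D y)"
    by (simp add: robust_risk_def prob_def R_def)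
  have fQ: "finite (Q z)" for z
    using fK[of z] by (rule rev_finite_subset[OF finite_Pow_iff[THEN iffD2]]) (auto simp: Q_def)
  have fS: "finite S" unfolding S_def using fE fQ by simp
  define W where "W z = (1 + x) ^ card (K z)" for z
  define N where "N = real n ^ (2*s)"
  have step1: "R \<subseteq> (\<lambda>(z,T). fl T z) ` S"
  proof
    fix y assume y: "y \<in> R"
    have yc: "y \<in> cube n" and ex: "\<exists>z\<in>hball n (log 2 (real n)) y. eval_tree c z \<noteq> eval_tree h z"
      using y by (simp_all add: R_def)
    then obtain z where z: "z \<in> hball n (log 2 (real n)) y" "eval_tree c z \<noteq> eval_tree h z"
      by blast
    have zc: "z \<in> cube n" and hz: "real (hamming y z) \<le> log 2 (real n)"
      using z by (auto simp: hball_def)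
    have yl: "length y = n" and zl: "length z = n" using yc zc by (auto simp: cube_def)
    define z' where "z' = map (\<lambda>j. if j \<in> K z then z!j else y!j) [0..<n]"
    have z'l: "length z' = n" by (simp add: z'_def)
    have z'n: "j < n \<Longrightarrow> z' ! j = (if j \<in> K z then z!j else y!j)" for j by (simp add: z'_def)
    have agK: "z'!j = z!j" if "j \<in> K z" for j
    proof -
      have "j < n" using that Ksub by blast
      then show ?thesis using z'n that by simp
    qed
    have agc: "\<forall>j\<in>pv c z. z'!j = z!j" using agK by (simp add: K_def)
    have agh: "\<forall>j\<in>pv h z. z'!j = z!j" using agK by (simp add: K_def)
    note pc = pv_agree[OF agc] and ph = pv_agree[OF agh]
    have z'E: "z' \<in> E" using pc ph z(2) z'l by (auto simp: E_def cube_def)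
    have Kz': "K z' = K z" using pc ph by (simp add: K_def)
    define T where "T = {j\<in>K z. y!j \<noteq> z!j}"
    have TK: "T \<subseteq> K z" by (auto simp: T_def)
    have "T \<subseteq> {i. i < length y \<and> y ! i \<noteq> z ! i}" using Ksub yl by (auto simp: T_def)
    then have "card T \<le> hamming y z" unfolding hamming_def by (intro card_mono) auto
    then have "real (card T) \<le> log 2 (real n)" using hz by linarith
    then have "2 powr real (card T) \<le> 2 powr log 2 (real n)" by simp
    then have T2: "(2::real) ^ card T \<le> real n" using n1 by (simp add: powr_realpow)
    have "y = fl T z'"
    proof (rule nth_equalityI)
      show "length y = length (fl T z')" using yl z'l by simp
    next
      fix j assume "j < length y"
      then have j: "j < n" using yl by simp
      show "y ! j = fl T z' ! j"
        using j z'l z'n[OF j] by (auto simp: T_def)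
    qed
    moreover have "(z', T) \<in> S" using z'E TK T2 Kz' by (simp add: S_def Q_def)
    ultimately show "y \<in> (\<lambda>(z,T). fl T z) ` S" by (intro image_eqI[where x="(z',T)"]) simp_all
  qed
  have "(\<Sum>y\<in>R. D y) \<le> (\<Sum>y\<in>(\<lambda>(z,T). fl T z) ` S. D y)"
  proof (rule sum_mono2)
    show "finite ((\<lambda>(z,T). fl T z) ` S)" using fS by simp
    show "R \<subseteq> (\<lambda>(z,T). fl T z) ` S" by (rule step1)
    show "\<And>b. b \<in> (\<lambda>(z,T). fl T z) ` S - R \<Longrightarrow> 0 \<le> D b"
      using Dpos fl_cube by (fastforce simp: S_def E_def intro: less_imp_le)
  qed
  also have "\<dots> \<le> (\<Sum>(z,T)\<in>S. D (fl T z))"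
  proof -
    have "(\<Sum>y\<in>(\<lambda>(z,T). fl T z) ` S. D y) \<le> sum (D \<circ> (\<lambda>(z,T). fl T z)) S"
      using fS Dpos fl_cube by (intro sum_image_le) (fastforce simp: S_def E_def intro: less_imp_le)+
    then show ?thesis by (simp add: comp_def case_prod_beta)
  qed
  also have "\<dots> = (\<Sum>z\<in>E. \<Sum>T\<in>Q z. D (fl T z))"
    unfolding S_def using fE fQ by (simp add: sum.Sigma)
  also have "\<dots> \<le> (\<Sum>z\<in>E. real n ^ (2*s) * (D z * (1 + x) ^ card (K z)))"
  proof (rule sum_mono)
    fix z assume zE: "z \<in> E"
    then have zc: "z \<in> cube n" by (simp add: E_def)
    have Dz: "D z > 0" using Dpos zc .
    have "(\<Sum>T\<in>Q z. D (fl T z)) \<le> (\<Sum>T\<in>Q z. real n ^ s * D z)"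
    proof (rule sum_mono)
      fix T assume T: "T \<in> Q z"
      have TK: "T \<subseteq> {..<n}" "finite T" using T Ksub fK by (auto simp: Q_def intro: finite_subset)
      have "D (fl T z) \<le> \<alpha> ^ card T * D z" using lip_chain[OF L a TK(2) TK(1) zc] .
      also have "\<alpha> ^ card T \<le> (2 ^ s) ^ card T"
        using s a by (intro power_mono) auto
      also have "(2 ^ s) ^ card T = ((2::real) ^ card T) ^ s" by (simp add: power_mult[symmetric] mult.commute)
      also have "\<dots> \<le> real n ^ s" using T by (intro power_mono) (auto simp: Q_def)
      finally show "D (fl T z) \<le> real n ^ s * D z" using Dz by (simp add: mult_right_mono)
    qed
    also have "\<dots> = real n ^ s * D z * real (card (Q z))" by simp
    also have "real (card (Q z)) \<le> (\<Sum>T\<in>Pow (K z). real n ^ s * x ^ card T)"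
    proof -
      have "real (card (Q z)) = (\<Sum>T\<in>Q z. 1)" by simp
      also have "\<dots> \<le> (\<Sum>T\<in>Q z. real n ^ s * x ^ card T)"
      proof (rule sum_mono)
        fix T assume T: "T \<in> Q z"
        have xe0: "x ^ card T = 1 / ((2::real) ^ card T) ^ s"
          by (simp add: x_def power_divide power_mult[symmetric] mult.commute)
        have "((2::real) ^ card T) ^ s \<le> real n ^ s" using T by (intro power_mono) (auto simp: Q_def)
        have "1 = x ^ card T * ((2::real) ^ card T) ^ s" using xe0 by simp
        also have "\<dots> \<le> x ^ card T * real n ^ s"
          using x0 \<open>((2::real) ^ card T) ^ s \<le> real n ^ s\<close> by (intro mult_left_mono) auto
        finally show "1 \<le> real n ^ s * x ^ card T" by (simp add: mult.commute)
      qed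
      also have "\<dots> \<le> (\<Sum>T\<in>Pow (K z). real n ^ s * x ^ card T)"
        using fK x0 by (intro sum_mono2) (auto simp: Q_def)
      finally show ?thesis .
    qed
    also have "(\<Sum>T\<in>Pow (K z). real n ^ s * x ^ card T) = real n ^ s * (1 + x) ^ card (K z)"
      using pow_sum[OF fK] by (simp add: sum_distrib_left[symmetric])
    finally have fin: "(\<Sum>T\<in>Q z. D (fl T z)) \<le> real n ^ s * D z * (real n ^ s * (1 + x) ^ card (K z))"
      using Dz n1 by (simp add: mult_left_mono)
    have nn: "real n ^ (2*s) = real n ^ s * real n ^ s" by (metis mult_2 power_add)
    have "real n ^ (2*s) * (D z * (1 + x) ^ card (K z)) = real n ^ s * D z * (real n ^ s * (1 + x) ^ card (K z))"
      unfolding nn by (simp add: algebra_simps)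
    then show "(\<Sum>T\<in>Q z. D (fl T z)) \<le> real n ^ (2*s) * (D z * (1 + x) ^ card (K z))"
      using fin by linarith
  qed
  also have "\<dots> = real n ^ (2*s) * (\<Sum>z\<in>E. D z * W z)"
    by (simp add: sum_distrib_left W_def)
  finally have R1: "(\<Sum>y\<in>R. D y) \<le> N * (\<Sum>z\<in>E. D z * W z)" by (simp add: N_def)
  have Wpos: "W z > 0" for z using x0 by (simp add: W_def)
  have N0: "N > 0" using n1 by (simp add: N_def)
  define t where "t = 4 * N * real m / \<epsilon>"
  have t0: "t > 0" using N0 m1 eps by (simp add: t_def)
  have step5: "(\<Sum>z\<in>E. D z * W z) \<le> t * \<delta> + (\<Sum>z\<in>cube n. D z * W z ^ 2) / t"
  proof -
    have "(\<Sum>z\<in>E. D z * W z) \<le> (\<Sum>z\<in>E. t * D z + D z * W z ^ 2 / t)"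
    proof (rule sum_mono)
      fix z assume "z \<in> E"
      then have Dz: "D z > 0" using Dpos by (simp add: E_def)
      have "W z \<le> t + W z ^ 2 / t"
      proof (cases "W z \<le> t")
        case True
        then show ?thesis using t0 by (simp add: add_increasing2)
      next
        case False
        then have "W z * t \<le> W z * W z" using Wpos[of z] by (intro mult_left_mono) auto
        then have "W z \<le> W z ^ 2 / t" using t0 by (simp add: field_simps power2_eq_square)
        then show ?thesis using t0 by linarith
      qed
      then have "D z * W z \<le> D z * (t + W z ^ 2 / t)" using Dz by (intro mult_left_mono) auto
      then show "D z * W z \<le> t * D z + D z * W z ^ 2 / t" by (simp add: algebra_simps)
    qed
    also have "\<dots> = t * \<delta> + (\<Sum>z\<in>E. D z * W z ^ 2) / t"
      by (simp add: sum.distrib sum_distrib_left sum_divide_distrib \<delta>_def)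
    also have "(\<Sum>z\<in>E. D z * W z ^ 2) \<le> (\<Sum>z\<in>cube n. D z * W z ^ 2)"
      using cube_finite by (intro sum_mono2) (auto simp: E_def intro!: mult_nonneg_nonneg less_imp_le[OF Dpos])
    finally show ?thesis using t0 by (simp add: divide_right_mono)
  qed
  have step6: "(\<Sum>z\<in>cube n. D z * W z ^ 2) \<le> real m"
  proof -
    have "(\<Sum>z\<in>cube n. D z * W z ^ 2) \<le> (\<Sum>z\<in>cube n. (D z * \<Gamma> ^ card (pv c z) + D z * \<Gamma> ^ card (pv h z)) / 2)"
    proof (rule sum_mono)
      fix z assume "z \<in> cube n"
      then have Dz: "D z > 0" using Dpos by simp
      define u where "u = (1 + x) ^ (2 * card (pv c z))"
      define v where "v = (1 + x) ^ (2 * card (pv h z))"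
      have "W z ^ 2 = (1 + x) ^ (2 * card (K z))" by (simp add: W_def power_mult[symmetric] mult.commute)
      also have "\<dots> \<le> (1 + x) ^ (2 * card (pv c z) + 2 * card (pv h z))"
        using x0 card_Un_le[of "pv c z" "pv h z"] by (intro power_increasing) (auto simp: K_def)
      also have "\<dots> = u * v" by (simp add: u_def v_def power_add)
      also have "\<dots> \<le> (u ^ 2 + v ^ 2) / 2"
      proof -
        have "0 \<le> (u - v)^2" by simp
        then have "2*(u*v) \<le> u^2 + v^2" by (simp add: power2_diff)
        then show ?thesis by simp
      qed
      also have "u ^ 2 \<le> \<Gamma> ^ card (pv c z)"
      proof -
        have "u ^ 2 = ((1 + x) ^ 4) ^ card (pv c z)" by (simp add: u_def power_mult[symmetric] mult.commute)
        also have "\<dots> \<le> \<Gamma> ^ card (pv c z)" using x4 x0 by (intro power_mono) auto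
        finally show ?thesis .
      qed
      also have "v ^ 2 \<le> \<Gamma> ^ card (pv h z)"
      proof -
        have "v ^ 2 = ((1 + x) ^ 4) ^ card (pv h z)" by (simp add: v_def power_mult[symmetric] mult.commute)
        also have "\<dots> \<le> \<Gamma> ^ card (pv h z)" using x4 x0 by (intro power_mono) auto
        finally show ?thesis .
      qed
      finally have "W z ^ 2 \<le> (\<Gamma> ^ card (pv c z) + \<Gamma> ^ card (pv h z)) / 2" by simp
      then have "D z * W z ^ 2 \<le> D z * ((\<Gamma> ^ card (pv c z) + \<Gamma> ^ card (pv h z)) / 2)"
        using Dz by (intro mult_left_mono) auto
      then show "D z * W z ^ 2 \<le> (D z * \<Gamma> ^ card (pv c z) + D z * \<Gamma> ^ card (pv h z)) / 2"
        by (simp add: algebra_simps)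
    qed
    also have "\<dots> = ((\<Sum>z\<in>cube n. D z * \<Gamma> ^ card (pv c z)) + (\<Sum>z\<in>cube n. D z * \<Gamma> ^ card (pv h z))) / 2"
      by (simp only: sum_divide_distrib[symmetric] sum.distrib)
    also have "\<dots> \<le> (real (nodes c) + real (nodes h)) / 2"
      using tree_cube[OF L a dist c] tree_cube[OF L a dist h] unfolding \<Gamma>_def by simp
    also have "\<dots> \<le> real m" using m by simp
    finally show ?thesis .
  qed
  have hyp': "\<delta> < \<epsilon> ^ 2 / (16 * real m * N ^ 2)"
  proof -
    have "(1 / real n) ^ (4 * s) = 1 / N ^ 2" by (simp add: N_def power_mult[symmetric] power_one_over mult.commute)
    then show ?thesis using hyp \<delta> by (simp add: field_simps)
  qed
  have "(\<Sum>y\<in>R. D y) \<le> N * (t * \<delta> + real m / t)"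
  proof -
    have "(\<Sum>z\<in>E. D z * W z) \<le> t * \<delta> + real m / t"
      using step5 step6 t0 by (smt (verit) divide_right_mono)
    then show ?thesis using R1 N0 by (smt (verit) mult_left_mono)
  qed
  also have "\<dots> = N * t * \<delta> + \<epsilon> / 4" using N0 m1 eps by (simp add: t_def field_simps)
  also have "N * t * \<delta> < \<epsilon> / 4"
  proof -
    have "N * t * \<delta> = 4 * N ^ 2 * real m / \<epsilon> * \<delta>" by (simp add: t_def power2_eq_square)
    also have "\<dots> < 4 * N ^ 2 * real m / \<epsilon> * (\<epsilon> ^ 2 / (16 * real m * N ^ 2))"
      using hyp' N0 m1 eps by (intro mult_strict_left_mono) auto
    also have "\<dots> = \<epsilon> / 4" using N0 m1 eps by (simp add: field_simps power2_eq_square)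
    finally show ?thesis .
  qed
  finally show ?thesis using rr eps by simp
qed

theorem theorem5p8:
  fixes \<alpha> :: real
  assumes "\<alpha> \<ge> 1"
  shows "\<exists>C::real. \<exists>a b d :: nat. C > 0 \<and>
    (\<forall>(n::nat) (m::nat) (c::dtree) (h::dtree) (D::bool list \<Rightarrow> real) (\<epsilon>::real).
       is_dtree n c \<longrightarrow> is_dtree n h \<longrightarrow> nodes c + nodes h \<le> m \<longrightarrow>
       is_distribution n D \<longrightarrow> log_lipschitz \<alpha> n D \<longrightarrow>
       0 < \<epsilon> \<longrightarrow> \<epsilon> < 1/2 \<longrightarrow>
       prob n D (\<lambda>x. eval_tree h x \<noteq> eval_tree c x)
          < C * (1 / real m) ^ a * (1 / real n) ^ b * \<epsilon> ^ d \<longrightarrow>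
       robust_risk n D (log 2 (real n)) c h < \<epsilon>)"
proof -
  obtain s :: nat where s: "15 * \<alpha> < 2 ^ s" using real_arch_pow[of "2::real" "15 * \<alpha>"] by auto
  show ?thesis
    apply (rule exI[where x="1/16"], rule exI[where x=1], rule exI[where x="4*s"], rule exI[where x=2])
    using main_bound[OF assms s] by auto
qed

end
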